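(* Let $\mathcal H$ be a separable Hilbert space and let $\Phi:B(\mathcal H)\to B(\mathcal H)$ be a quantum channel with Kraus representation $\Phi(A)=\sum_{k\ge1}V_k^*AV_k$, $V_k\in B(\mathcal H)$, $\sum_kV_k^*V_k=I$. Then the multiplicative domain of $\Phi$ satisfies \[ \mathcal M(\Phi)=\{V_jV_k^*:\ j,k=1,2,\dots\}'. \]
   Context: A quantum channel is a unital normal completely positive map $\Phi:B(\mathcal H)\to B(\mathcal H)$. The multiplicative domain is $\mathcal M(\Phi)=\{A\in B(\mathcal H): \Phi(A^*A)=\Phi(A)^*\Phi(A),\ \Phi(AA^* )=\Phi(A)\Phi(A)^*\}$. $'$ denotes the commutant. *)

theory Defs
  imports "HOL-Analysis.Analysis" "HOL-Library.Function_Algebras"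
begin

text \<open>Separable complex Hilbert space modelled concretely as \<open>\<ell>\<^sup>2('i)\<close> for a
countable index type \<open>'i\<close>.  Vectors are functions \<open>'i \<Rightarrow> complex\<close>;
bounded operators are functions on vectors that preserve \<open>\<ell>\<^sup>2\<close>, are linear and
bounded on it, and are normalised to \<open>0\<close> outside \<open>\<ell>\<^sup>2\<close> (so that operator equality
is plain function equality).\<close>

type_synonym 'i vec = "'i \<Rightarrow> complex"
type_synonym 'i op = "'i vec \<Rightarrow> 'i vec"

definition ell2 :: "'i vec set" where
  "ell2 = {x. (\<lambda>i. (cmod (x i))^2) summable_on UNIV}"

definition l2norm :: "'i vec \<Rightarrow> real" where
  "l2norm x = sqrt (infsum (\<lambda>i. (cmod (x i))^2) UNIV)"

definition cinner :: "'i vec \<Rightarrow> 'i vec \<Rightarrow> complex" where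
  "cinner x y = infsum (\<lambda>i. cnj (x i) * y i) UNIV"

definition scal :: "complex \<Rightarrow> 'i vec \<Rightarrow> 'i vec" where
  "scal a x = (\<lambda>i. a * x i)"

definition bounded_op :: "'i op \<Rightarrow> bool" where
  "bounded_op T \<longleftrightarrow>
     (\<forall>x\<in>ell2. T x \<in> ell2) \<and>
     (\<forall>x\<in>ell2. \<forall>y\<in>ell2. T (x + y) = T x + T y) \<and>
     (\<forall>x\<in>ell2. \<forall>a. T (scal a x) = scal a (T x)) \<and>
     (\<exists>C. \<forall>x\<in>ell2. l2norm (T x) \<le> C * l2norm x) \<and>
     (\<forall>x. x \<notin> ell2 \<longrightarrow> T x = 0)"

definition adj :: "'i op \<Rightarrow> 'i op" where
  "adj T = (THE S. bounded_op S \<and> (\<forall>x\<in>ell2. \<forall>y\<in>ell2. cinner (S x) y = cinner x (T y)))"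

definition kraus :: "(nat \<Rightarrow> 'i op) \<Rightarrow> 'i op \<Rightarrow> 'i op" where
  "kraus V A = (THE T. bounded_op T \<and>
      (\<forall>x\<in>ell2. (\<lambda>n. l2norm ((\<Sum>k<n. adj (V k) (A (V k x))) - T x)) \<longlonglongrightarrow> 0))"

definition mult_domain :: "('i op \<Rightarrow> 'i op) \<Rightarrow> 'i op set" where
  "mult_domain \<Phi> = {A. bounded_op A \<and>
      \<Phi> (adj A \<circ> A) = adj (\<Phi> A) \<circ> \<Phi> A \<and>
      \<Phi> (A \<circ> adj A) = \<Phi> A \<circ> adj (\<Phi> A)}"

definition commutant :: "'i op set \<Rightarrow> 'i op set" where
  "commutant S = {A. bounded_op A \<and> (\<forall>B\<in>S. A \<circ> B = B \<circ> A)}"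

end

theory Submission
  imports Defs
begin


lemma ell2_iff: "x \<in> ell2 \<longleftrightarrow> (\<lambda>i. (cmod (x i))^2) summable_on UNIV"
  by (simp add: ell2_def)

lemma infsum_sq_nonneg: "0 \<le> infsum (\<lambda>i. (cmod (x i))^2) UNIV"
  by (rule infsum_nonneg) simp

lemma l2norm_nonneg: "0 \<le> l2norm x"
  by (simp add: l2norm_def infsum_sq_nonneg)

lemma l2norm_sq: "(l2norm x)^2 = infsum (\<lambda>i. (cmod (x i))^2) UNIV"
  by (simp add: l2norm_def infsum_sq_nonneg)

lemma ell2_boundI:
  assumes "\<And>F. finite F \<Longrightarrow> (\<Sum>i\<in>F. (cmod (x i))^2) \<le> c"
  shows "x \<in> ell2" "infsum (\<lambda>i. (cmod (x i))^2) UNIV \<le> c"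
proof -
  have s: "(\<lambda>i. (cmod (x i))^2) summable_on UNIV"
    by (rule nonneg_bdd_above_summable_on) (auto intro!: bdd_aboveI2 assms)
  then show "x \<in> ell2" by (simp add: ell2_def)
  show "infsum (\<lambda>i. (cmod (x i))^2) UNIV \<le> c"
    by (rule infsum_le_finite_sums[OF s]) (simp add: assms)
qed

lemma ell2_boundI2:
  assumes "\<And>F. finite F \<Longrightarrow> (\<Sum>i\<in>F. (cmod (x i))^2) \<le> c^2" "0 \<le> c"
  shows "x \<in> ell2" "l2norm x \<le> c"
proof -
  show "x \<in> ell2" using ell2_boundI(1)[OF assms(1)] .
  have "(l2norm x)^2 \<le> c^2" unfolding l2norm_sq using ell2_boundI(2)[OF assms(1)] .
  then show "l2norm x \<le> c" using assms(2) l2norm_nonneg power2_le_imp_le by blast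
qed

lemma ell2_fin:
  assumes "x \<in> ell2" "finite F"
  shows "(\<Sum>i\<in>F. (cmod (x i))^2) \<le> (l2norm x)^2"
  unfolding l2norm_sq using assms
  by (intro finite_sum_le_infsum) (auto simp: ell2_def)

lemma ell2_zero[simp]: "0 \<in> ell2"
  by (simp add: ell2_def)

lemma sq_ineq1: "((a::real) + b)^2 \<le> 2 * a^2 + 2 * b^2"
proof -
  have "0 \<le> (a - b)^2" by simp
  then show ?thesis by (simp add: power2_eq_square algebra_simps)
qed

lemma sq_ineq2: "0 \<le> (a::real) \<Longrightarrow> 0 \<le> b \<Longrightarrow> a * b \<le> a^2 + b^2"
proof -
  have "0 \<le> (a - b)^2" by simp
  then have "2 * (a * b) \<le> a^2 + b^2" by (simp add: power2_eq_square algebra_simps)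
  moreover assume "0 \<le> a" "0 \<le> b"
  then have "0 \<le> a * b" by simp
  ultimately show ?thesis by linarith
qed

lemma ell2_add[simp]:
  assumes "x \<in> ell2" "y \<in> ell2" shows "x + y \<in> ell2"
proof -
  have "(\<lambda>i. 2 * (cmod (x i))^2 + 2 * (cmod (y i))^2) summable_on UNIV"
    using assms by (intro summable_on_add summable_on_cmult_right) (auto simp: ell2_def)
  moreover have "(cmod ((x + y) i))^2 \<le> 2 * (cmod (x i))^2 + 2 * (cmod (y i))^2" for i
  proof -
    have "cmod ((x+y) i) \<le> cmod (x i) + cmod (y i)" by (simp add: norm_triangle_ineq)
    then have "(cmod ((x+y) i))^2 \<le> (cmod (x i) + cmod (y i))^2"
      by (simp add: power_mono)
    also have "\<dots> \<le> 2 * (cmod (x i))^2 + 2 * (cmod (y i))^2"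
      using sq_ineq1[of "cmod (x i)" "cmod (y i)"] .
    finally show ?thesis .
  qed
  ultimately show ?thesis unfolding ell2_def
    apply (intro CollectI) by (rule summable_on_comparison_test[where f="\<lambda>i. 2 * (cmod (x i))^2 + 2 * (cmod (y i))^2"]) auto
qed

lemma ell2_scal[simp]:
  assumes "x \<in> ell2" shows "scal a x \<in> ell2"
proof -
  have "(\<lambda>i. (cmod a)^2 * (cmod (x i))^2) summable_on UNIV"
    using assms by (intro summable_on_cmult_right) (auto simp: ell2_def)
  then show ?thesis by (simp add: ell2_def scal_def norm_mult power_mult_distrib)
qed

lemma uminus_scal: "- x = scal (-1) x"
  by (simp add: scal_def fun_eq_iff)

lemma diff_scal: "x - y = x + scal (-1) y"
  by (simp add: scal_def fun_eq_iff)

lemma ell2_uminus[simp]: "x \<in> ell2 \<Longrightarrow> - x \<in> ell2"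
  by (simp add: uminus_scal)

lemma ell2_diff[simp]: "x \<in> ell2 \<Longrightarrow> y \<in> ell2 \<Longrightarrow> x - y \<in> ell2"
  by (simp add: diff_scal)

lemma ell2_sum[simp]: "(\<And>k. k \<in> K \<Longrightarrow> f k \<in> ell2) \<Longrightarrow> sum f K \<in> ell2"
  by (induction K rule: infinite_finite_induct) auto

lemma cinner_abs_summable:
  assumes "x \<in> ell2" "y \<in> ell2"
  shows "(\<lambda>i. cmod (x i) * cmod (y i)) summable_on UNIV"
proof -
  have "(\<lambda>i. (cmod (x i))^2 + (cmod (y i))^2) summable_on UNIV"
    using assms by (intro summable_on_add) (auto simp: ell2_def)
  moreover have "cmod (x i) * cmod (y i) \<le> (cmod (x i))^2 + (cmod (y i))^2" for i
    using sq_ineq2[of "cmod (x i)" "cmod (y i)"] by simp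
  ultimately show ?thesis
    by (rule summable_on_comparison_test[where f="\<lambda>i. (cmod (x i))^2 + (cmod (y i))^2"]) auto
qed

lemma cinner_summable:
  assumes "x \<in> ell2" "y \<in> ell2"
  shows "(\<lambda>i. cnj (x i) * y i) summable_on UNIV"
  apply (rule summable_on_iff_abs_summable_on_complex[THEN iffD2])
  using cinner_abs_summable[OF assms] by (simp add: norm_mult)




lemma cinner_add_right: "x \<in> ell2 \<Longrightarrow> y \<in> ell2 \<Longrightarrow> z \<in> ell2 \<Longrightarrow>
  cinner x (y + z) = cinner x y + cinner x z"
  unfolding cinner_def by (simp add: distrib_left infsum_add cinner_summable)

lemma cinner_add_left: "x \<in> ell2 \<Longrightarrow> y \<in> ell2 \<Longrightarrow> z \<in> ell2 \<Longrightarrow>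
  cinner (y + z) x = cinner y x + cinner z x"
  unfolding cinner_def by (simp add: distrib_right infsum_add cinner_summable)

lemma cinner_scal_right: "cinner x (scal a y) = a * cinner x y"
  unfolding cinner_def scal_def
  by (simp add: mult.left_commute infsum_cmult_right')

lemma cinner_scal_left: "cinner (scal a y) x = cnj a * cinner y x"
  unfolding cinner_def scal_def
  by (simp add: mult.assoc infsum_cmult_right')

lemma cinner_cnj: "cnj (cinner x y) = cinner y x"
  unfolding cinner_def by (simp flip: infsum_cnj add: mult.commute)

lemma cinner_diff_right: "x \<in> ell2 \<Longrightarrow> y \<in> ell2 \<Longrightarrow> z \<in> ell2 \<Longrightarrow>
  cinner x (y - z) = cinner x y - cinner x z"
  by (simp add: diff_scal cinner_add_right cinner_scal_right)

lemma cinner_diff_left: "x \<in> ell2 \<Longrightarrow> y \<in> ell2 \<Longrightarrow> z \<in> ell2 \<Longrightarrow>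
  cinner (y - z) x = cinner y x - cinner z x"
  by (simp add: diff_scal cinner_add_left cinner_scal_left)

lemma cinner_zero_left[simp]: "cinner 0 x = 0"
  by (simp add: cinner_def)

lemma cinner_zero_right[simp]: "cinner x 0 = 0"
  by (simp add: cinner_def)

lemma cinner_sum_right: "x \<in> ell2 \<Longrightarrow> (\<And>k. k \<in> K \<Longrightarrow> f k \<in> ell2) \<Longrightarrow>
  cinner x (sum f K) = (\<Sum>k\<in>K. cinner x (f k))"
  by (induction K rule: infinite_finite_induct) (auto simp: cinner_add_right)

lemma cinner_sum_left: "x \<in> ell2 \<Longrightarrow> (\<And>k. k \<in> K \<Longrightarrow> f k \<in> ell2) \<Longrightarrow>
  cinner (sum f K) x = (\<Sum>k\<in>K. cinner (f k) x)"
  by (induction K rule: infinite_finite_induct) (auto simp: cinner_add_left)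

lemma infsum_of_real:
  "infsum (\<lambda>i. complex_of_real (g i)) A = complex_of_real (infsum g A)"
proof (cases "g summable_on A")
  case True
  then show ?thesis by (intro infsumI has_sum_of_real has_sum_infsum)
next
  case False
  have "\<not> (\<lambda>i. complex_of_real (g i)) summable_on A"
  proof
    assume "(\<lambda>i. complex_of_real (g i)) summable_on A"
    from summable_on_bounded_linear[OF bounded_linear_Re this] False show False by simp
  qed
  then show ?thesis using False by (simp add: infsum_not_exists)
qed

lemma cinner_self: "cinner x x = complex_of_real ((l2norm x)^2)"
proof -
  have "cnj (x i) * x i = complex_of_real ((cmod (x i))^2)" for i
    by (metis complex_norm_square mult.commute of_real_power)
  then have "cinner x x = infsum (\<lambda>i. complex_of_real ((cmod (x i))^2)) UNIV"
    by (simp add: cinner_def)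
  also have "\<dots> = complex_of_real (infsum (\<lambda>i. (cmod (x i))^2) UNIV)"
    by (rule infsum_of_real)
  finally show ?thesis by (simp add: l2norm_sq)
qed

lemma l2norm_eq0:
  assumes "x \<in> ell2" "l2norm x = 0" shows "x = 0"
proof
  fix i
  have "infsum (\<lambda>i. (cmod (x i))^2) UNIV \<le> 0"
    using assms(2) l2norm_sq[of x] by simp
  then have "(cmod (x i))^2 = 0"
    by (rule nonneg_infsum_le_0D) (use assms(1) in \<open>auto simp: ell2_def\<close>)
  then show "x i = 0 i" by simp
qed

lemma l2norm_zero[simp]: "l2norm 0 = 0"
  by (simp add: l2norm_def)

lemma cinner_cs:
  assumes "x \<in> ell2" "y \<in> ell2"
  shows "cmod (cinner x y) \<le> l2norm x * l2norm y"
proof -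
  have "cmod (cinner x y) \<le> infsum (\<lambda>i. cmod (cnj (x i) * y i)) UNIV"
    unfolding cinner_def
    by (rule norm_infsum_bound) (use cinner_abs_summable[OF assms] in \<open>simp add: norm_mult\<close>)
  also have "\<dots> = infsum (\<lambda>i. cmod (x i) * cmod (y i)) UNIV"
    by (simp add: norm_mult)
  also have "\<dots> \<le> l2norm x * l2norm y"
  proof (rule infsum_le_finite_sums[OF cinner_abs_summable[OF assms]])
    fix F :: "'a set" assume F: "finite F"
    have "(\<Sum>i\<in>F. cmod (x i) * cmod (y i)) = (\<Sum>i\<in>F. \<bar>cmod (x i)\<bar> * \<bar>cmod (y i)\<bar>)"
      by simp
    also have "\<dots> \<le> L2_set (\<lambda>i. cmod (x i)) F * L2_set (\<lambda>i. cmod (y i)) F"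
      by (rule L2_set_mult_ineq)
    also have "\<dots> \<le> l2norm x * l2norm y"
    proof (rule mult_mono)
      show "L2_set (\<lambda>i. cmod (x i)) F \<le> l2norm x"
        unfolding L2_set_def using ell2_fin[OF assms(1) F] l2norm_nonneg[of x]
        by (simp add: real_le_lsqrt)
      show "L2_set (\<lambda>i. cmod (y i)) F \<le> l2norm y"
        unfolding L2_set_def using ell2_fin[OF assms(2) F] l2norm_nonneg[of y]
        by (simp add: real_le_lsqrt)
    qed (auto simp: l2norm_nonneg L2_set_def sum_nonneg)
    finally show "(\<Sum>i\<in>F. cmod (x i) * cmod (y i)) \<le> l2norm x * l2norm y" .
  qed
  finally show ?thesis .
qed

lemma l2norm_triangle:
  assumes "x \<in> ell2" "y \<in> ell2"
  shows "l2norm (x + y) \<le> l2norm x + l2norm y"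
proof (rule ell2_boundI2(2))
  fix F :: "'a set" assume F: "finite F"
  have eq: "(\<Sum>i\<in>F. (cmod ((x + y) i))^2) = (L2_set (\<lambda>i. cmod ((x + y) i)) F)^2"
    by (simp add: L2_set_def sum_nonneg)
  have "L2_set (\<lambda>i. cmod ((x + y) i)) F \<le> L2_set (\<lambda>i. cmod (x i) + cmod (y i)) F"
    by (rule L2_set_mono) (auto simp: norm_triangle_ineq)
  also have "\<dots> \<le> L2_set (\<lambda>i. cmod (x i)) F + L2_set (\<lambda>i. cmod (y i)) F"
    by (rule L2_set_triangle_ineq)
  also have "\<dots> \<le> l2norm x + l2norm y"
  proof (rule add_mono)
    show "L2_set (\<lambda>i. cmod (x i)) F \<le> l2norm x"
      unfolding L2_set_def using ell2_fin[OF assms(1) F] l2norm_nonneg[of x]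
      by (simp add: real_le_lsqrt)
    show "L2_set (\<lambda>i. cmod (y i)) F \<le> l2norm y"
      unfolding L2_set_def using ell2_fin[OF assms(2) F] l2norm_nonneg[of y]
      by (simp add: real_le_lsqrt)
  qed
  finally have "L2_set (\<lambda>i. cmod ((x + y) i)) F \<le> l2norm x + l2norm y" .
  then show "(\<Sum>i\<in>F. (cmod ((x + y) i))^2) \<le> (l2norm x + l2norm y)^2"
    unfolding eq by (rule power_mono) (simp add: L2_set_def sum_nonneg)
qed (simp add: l2norm_nonneg)

lemma l2norm_scal: "l2norm (scal a x) = cmod a * l2norm x"
proof -
  have "infsum (\<lambda>i. (cmod (scal a x i))^2) UNIV = (cmod a)^2 * infsum (\<lambda>i. (cmod (x i))^2) UNIV"
    by (simp add: scal_def norm_mult power_mult_distrib infsum_cmult_right')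
  then show ?thesis by (simp add: l2norm_def real_sqrt_mult)
qed

lemma l2norm_uminus: "l2norm (- x) = l2norm x"
  by (simp add: uminus_scal l2norm_scal)

lemma l2norm_commute: "l2norm (x - y) = l2norm (y - x)"
  by (metis l2norm_uminus minus_diff_eq)

lemma l2norm_triangle_diff:
  assumes "x \<in> ell2" "y \<in> ell2" "z \<in> ell2"
  shows "l2norm (x - z) \<le> l2norm (x - y) + l2norm (y - z)"
  using l2norm_triangle[of "x - y" "y - z"] assms by simp

lemma ell2_ext:
  assumes "a \<in> ell2" "b \<in> ell2" "\<And>y. y \<in> ell2 \<Longrightarrow> cinner a y = cinner b y"
  shows "a = b"
proof -
  have "cinner (a - b) (a - b) = 0"
    using assms by (simp add: cinner_diff_left)
  then have "l2norm (a - b) = 0" by (simp add: cinner_self)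
  then have "a - b = 0" using l2norm_eq0[of "a - b"] assms(1,2) by simp
  then show ?thesis by simp
qed




lemma bop_ell2: "bounded_op T \<Longrightarrow> x \<in> ell2 \<Longrightarrow> T x \<in> ell2"
  by (simp add: bounded_op_def)
lemma bop_add: "bounded_op T \<Longrightarrow> x \<in> ell2 \<Longrightarrow> y \<in> ell2 \<Longrightarrow> T (x + y) = T x + T y"
  by (simp add: bounded_op_def)
lemma bop_scal: "bounded_op T \<Longrightarrow> x \<in> ell2 \<Longrightarrow> T (scal a x) = scal a (T x)"
  by (simp add: bounded_op_def)
lemma bop_out: "bounded_op T \<Longrightarrow> x \<notin> ell2 \<Longrightarrow> T x = 0"
  by (simp add: bounded_op_def)
lemma bop_bound: "bounded_op T \<Longrightarrow> \<exists>C\<ge>0. \<forall>x\<in>ell2. l2norm (T x) \<le> C * l2norm x"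
proof -
  assume "bounded_op T"
  then obtain C where C: "\<forall>x\<in>ell2. l2norm (T x) \<le> C * l2norm x" by (auto simp: bounded_op_def)
  have "l2norm (T x) \<le> max C 0 * l2norm x" if "x \<in> ell2" for x
    using C that mult_right_mono[OF max.cobounded1 l2norm_nonneg[of x], of C 0] by (meson order_trans)
  then show ?thesis by (intro exI[of _ "max C 0"]) auto
qed

lemma bop_zero: "bounded_op T \<Longrightarrow> T 0 = 0"
  using bop_add[of T 0 0] by simp

lemma bop_diff:
  assumes "bounded_op T" "x \<in> ell2" "y \<in> ell2" shows "T (x - y) = T x - T y"
proof -
  have "T (x - y) = T (x + scal (-1) y)" by (simp only: diff_scal)
  also have "\<dots> = T x + scal (-1) (T y)" using assms by (simp add: bop_add bop_scal fun_eq_iff)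
  also have "\<dots> = T x - T y" by (simp only: diff_scal)
  finally show ?thesis .
qed

lemma bop_sum: "bounded_op T \<Longrightarrow> (\<And>k. k \<in> K \<Longrightarrow> f k \<in> ell2) \<Longrightarrow> T (sum f K) = (\<Sum>k\<in>K. T (f k))"
  by (induction K rule: infinite_finite_induct) (auto simp: bop_zero bop_add)

lemma bop_comp:
  assumes S: "bounded_op S" and T: "bounded_op T"
  shows "bounded_op (S \<circ> T)"
proof -
  obtain C where C: "C \<ge> 0" "\<forall>x\<in>ell2. l2norm (S x) \<le> C * l2norm x" using bop_bound[OF S] by auto
  obtain D where D: "D \<ge> 0" "\<forall>x\<in>ell2. l2norm (T x) \<le> D * l2norm x" using bop_bound[OF T] by auto
  have "l2norm (S (T x)) \<le> (C * D) * l2norm x" if "x \<in> ell2" for x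
  proof -
    have "l2norm (S (T x)) \<le> C * l2norm (T x)" using C that bop_ell2[OF T] by auto
    also have "\<dots> \<le> C * (D * l2norm x)" using D that C(1) by (simp add: mult_left_mono)
    finally show ?thesis by simp
  qed
  moreover have "S (T (x + y)) = S (T x) + S (T y)" if "x \<in> ell2" "y \<in> ell2" for x y
  proof -
    have "T (x + y) = T x + T y" using that T by (rule bop_add[rotated])
    then have "S (T (x + y)) = S (T x + T y)" by simp
    also have "\<dots> = S (T x) + S (T y)" using that S T by (simp add: bop_add bop_ell2 fun_eq_iff)
    finally show ?thesis .
  qed
  moreover have "S (T (scal a x)) = scal a (S (T x))" if "x \<in> ell2" for x a
  proof -
    have "S (T (scal a x)) = S (scal a (T x))" using that T by (simp add: bop_scal)
    also have "\<dots> = scal a (S (T x))" using that S T by (simp add: bop_scal bop_ell2)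
    finally show ?thesis .
  qed
  moreover have "S (T x) = 0" if "x \<notin> ell2" for x
  proof -
    have "T x = 0" using bop_out[OF T that] .
    then show ?thesis using bop_zero[OF S] by simp
  qed
  ultimately show ?thesis using S T unfolding bounded_op_def[of "S \<circ> T"] comp_apply
    by (auto simp: bop_ell2)
qed

lemma conv_inner:
  assumes "\<And>n. a n \<in> ell2" "b \<in> ell2" "y \<in> ell2"
    and "((\<lambda>n. l2norm (a n - b)) \<longlongrightarrow> 0) F"
  shows "((\<lambda>n. cinner (a n) y) \<longlongrightarrow> cinner b y) F"
proof -
  have "((\<lambda>n. cinner (a n) y - cinner b y) \<longlongrightarrow> 0) F"
  proof (rule Lim_null_comparison)
    show "\<forall>\<^sub>F n in F. norm (cinner (a n) y - cinner b y) \<le> l2norm (a n - b) * l2norm y"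
      using assms cinner_cs[of "a _ - b" y] by (simp add: cinner_diff_left[symmetric])
    show "((\<lambda>n. l2norm (a n - b) * l2norm y) \<longlongrightarrow> 0) F"
      using assms(4) by (rule tendsto_mult_left_zero)
  qed
  then show ?thesis by (rule LIM_zero_cancel)
qed

lemma conv_op:
  assumes T: "bounded_op T" and "\<And>n. a n \<in> ell2" "b \<in> ell2"
    and "((\<lambda>n. l2norm (a n - b)) \<longlongrightarrow> 0) F"
  shows "((\<lambda>n. l2norm (T (a n) - T b)) \<longlongrightarrow> 0) F"
proof -
  obtain C where C: "C \<ge> 0" "\<forall>x\<in>ell2. l2norm (T x) \<le> C * l2norm x" using bop_bound[OF T] by auto
  show ?thesis
  proof (rule Lim_null_comparison)
    show "\<forall>\<^sub>F n in F. norm (l2norm (T (a n) - T b)) \<le> C * l2norm (a n - b)"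
      using assms C by (simp add: l2norm_nonneg bop_diff[symmetric])
    show "((\<lambda>n. C * l2norm (a n - b)) \<longlongrightarrow> 0) F"
      using assms(4) by (rule tendsto_mult_right_zero)
  qed
qed

lemma conv_add:
  assumes "\<And>n. a n \<in> ell2" "\<And>n. b n \<in> ell2" "\<alpha> \<in> ell2" "\<beta> \<in> ell2"
    and "((\<lambda>n. l2norm (a n - \<alpha>)) \<longlongrightarrow> 0) F" "((\<lambda>n. l2norm (b n - \<beta>)) \<longlongrightarrow> 0) F"
  shows "((\<lambda>n. l2norm ((a n + b n) - (\<alpha> + \<beta>))) \<longlongrightarrow> 0) F"
proof (rule Lim_null_comparison)
  show "\<forall>\<^sub>F n in F. norm (l2norm ((a n + b n) - (\<alpha> + \<beta>))) \<le> l2norm (a n - \<alpha>) + l2norm (b n - \<beta>)"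
  proof (intro always_eventually allI)
    fix n
    have "(a n + b n) - (\<alpha> + \<beta>) = (a n - \<alpha>) + (b n - \<beta>)" by (simp add: algebra_simps)
    then have "norm (l2norm ((a n + b n) - (\<alpha> + \<beta>))) = l2norm ((a n - \<alpha>) + (b n - \<beta>))"
      by (simp only: real_norm_def abs_of_nonneg[OF l2norm_nonneg])
    then show "norm (l2norm ((a n + b n) - (\<alpha> + \<beta>))) \<le> l2norm (a n - \<alpha>) + l2norm (b n - \<beta>)"
      using l2norm_triangle[of "a n - \<alpha>" "b n - \<beta>"] assms by simp
  qed
  show "((\<lambda>n. l2norm (a n - \<alpha>) + l2norm (b n - \<beta>)) \<longlongrightarrow> 0) F"
    using tendsto_add_zero[OF assms(5,6)] .
qed

lemma conv_unique:
  assumes "F \<noteq> bot" "\<And>n. a n \<in> ell2" "\<alpha> \<in> ell2" "\<beta> \<in> ell2"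
    and "((\<lambda>n. l2norm (a n - \<alpha>)) \<longlongrightarrow> 0) F" "((\<lambda>n. l2norm (a n - \<beta>)) \<longlongrightarrow> 0) F"
  shows "\<alpha> = \<beta>"
proof (rule ell2_ext)
  show "\<And>y. y \<in> ell2 \<Longrightarrow> cinner \<alpha> y = cinner \<beta> y"
    subgoal for y using tendsto_unique[OF assms(1) conv_inner[OF assms(2,3) _ assms(5)] conv_inner[OF assms(2,4) _ assms(6)]] by simp
    done
qed (use assms in auto)




lemma sum_fun_apply: "(sum f K) j = (\<Sum>k\<in>K. f k j)"
  by (induction K rule: infinite_finite_induct) auto

lemma conv_inner_right:
  assumes "\<And>n. a n \<in> ell2" "b \<in> ell2" "y \<in> ell2"
    and "((\<lambda>n. l2norm (a n - b)) \<longlongrightarrow> 0) F"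
  shows "((\<lambda>n. cinner y (a n)) \<longlongrightarrow> cinner y b) F"
proof -
  have "((\<lambda>n. cnj (cinner (a n) y)) \<longlongrightarrow> cnj (cinner b y)) F"
    by (intro tendsto_cnj conv_inner assms)
  then show ?thesis by (simp add: cinner_cnj)
qed

definition ev :: "'i \<Rightarrow> 'i vec" where "ev i = (\<lambda>j. if j = i then 1 else 0)"
definition tr :: "'i set \<Rightarrow> 'i vec \<Rightarrow> 'i vec" where "tr F y = (\<lambda>j. if j \<in> F then y j else 0)"

lemma infsum_fin_supp:
  assumes "finite F" "\<And>j. j \<notin> F \<Longrightarrow> g j = 0"
  shows "infsum g UNIV = sum g F"
proof -
  have "infsum g UNIV = infsum g F"
    by (rule infsum_cong_neutral) (use assms in auto)
  then show ?thesis using assms(1) by simp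
qed

lemma ell2_fin_supp:
  assumes "finite F" "\<And>j. j \<notin> F \<Longrightarrow> x j = 0"
  shows "x \<in> ell2" "(l2norm x)^2 = (\<Sum>j\<in>F. (cmod (x j))^2)"
proof -
  show "x \<in> ell2" unfolding ell2_def
    by (intro CollectI finite_nonzero_values_imp_summable_on
        finite_subset[OF _ assms(1)]) (use assms(2) in auto)
  show "(l2norm x)^2 = (\<Sum>j\<in>F. (cmod (x j))^2)"
    unfolding l2norm_sq by (rule infsum_fin_supp) (use assms in auto)
qed

lemma ev_ell2[simp]: "ev i \<in> ell2"
  by (rule ell2_fin_supp(1)[of "{i}"]) (auto simp: ev_def)

lemma tr_ell2[simp]: "finite F \<Longrightarrow> tr F y \<in> ell2"
  by (rule ell2_fin_supp(1)[of F]) (auto simp: tr_def)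

lemma tr_ell2': "y \<in> ell2 \<Longrightarrow> tr F y \<in> ell2"
  unfolding ell2_def
  by (intro CollectI, rule summable_on_comparison_test[where f="\<lambda>i. (cmod (y i))^2"])
     (auto simp: ell2_def tr_def)

lemma tr_sum: "finite F \<Longrightarrow> tr F y = (\<Sum>i\<in>F. scal (y i) (ev i))"
  by (auto simp: fun_eq_iff sum_fun_apply tr_def scal_def ev_def if_distrib[of "\<lambda>x. _ * x"] sum.delta cong: if_cong)

lemma op_tr:
  assumes "bounded_op T" "finite F"
  shows "T (tr F y) = (\<Sum>i\<in>F. scal (y i) (T (ev i)))"
  unfolding tr_sum[OF assms(2)] using assms by (simp add: bop_sum bop_scal)

lemma cinner_op_tr:
  assumes "bounded_op T" "finite F" "x \<in> ell2"
  shows "cinner x (T (tr F y)) = (\<Sum>i\<in>F. y i * cinner x (T (ev i)))"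
  unfolding op_tr[OF assms(1,2)] using assms
  by (simp add: cinner_sum_right bop_ell2 cinner_scal_right)

lemma tr_conv:
  assumes y: "y \<in> ell2"
  shows "((\<lambda>F. l2norm (tr F y - y)) \<longlongrightarrow> 0) (finite_subsets_at_top UNIV)"
proof -
  define g where "g j = (cmod (y j))^2" for j
  have gs: "g summable_on UNIV" using y unfolding g_def[abs_def] by (simp add: ell2_def)
  have g0: "g j \<ge> 0" for j by (simp add: g_def)
  have key: "(l2norm (tr F y - y))^2 = infsum g UNIV - sum g F" if F: "finite F" for F
  proof -
    define h where "h j = (if j \<in> F then 0 else g j)" for j
    have hs: "h summable_on UNIV"
      by (rule summable_on_comparison_test[OF gs]) (auto simp: h_def g0)
    have ks: "(\<lambda>j. if j \<in> F then g j else 0) summable_on UNIV"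
      by (rule finite_nonzero_values_imp_summable_on, rule finite_subset[OF _ F]) auto
    have "infsum g UNIV = infsum (\<lambda>j. (if j \<in> F then g j else 0) + h j) UNIV"
      by (rule infsum_cong) (simp add: h_def)
    also have "\<dots> = infsum (\<lambda>j. if j \<in> F then g j else 0) UNIV + infsum h UNIV"
      by (rule infsum_add[OF ks hs])
    also have "infsum (\<lambda>j. if j \<in> F then g j else 0) UNIV = sum g F"
      by (subst infsum_fin_supp[OF F]) auto
    finally have "infsum h UNIV = infsum g UNIV - sum g F" by simp
    moreover have "(l2norm (tr F y - y))^2 = infsum h UNIV"
      unfolding l2norm_sq by (rule infsum_cong) (simp add: h_def g_def tr_def)
    ultimately show ?thesis by simp
  qed
  have lim: "(sum g \<longlongrightarrow> infsum g UNIV) (finite_subsets_at_top UNIV)"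
    using gs has_sum_def has_sum_infsum by blast
  have "((\<lambda>F. infsum g UNIV - sum g F) \<longlongrightarrow> 0) (finite_subsets_at_top UNIV)"
    using tendsto_diff[OF tendsto_const[of "infsum g UNIV"] lim] by simp
  then have L: "((\<lambda>F. sqrt (infsum g UNIV - sum g F)) \<longlongrightarrow> 0) (finite_subsets_at_top UNIV)"
    using tendsto_real_sqrt by fastforce
  have E: "\<forall>\<^sub>F F in finite_subsets_at_top UNIV. sqrt (infsum g UNIV - sum g F) = l2norm (tr F y - y)"
    by (rule eventually_finite_subsets_at_top_weakI) (simp add: key[symmetric] l2norm_nonneg)
  show ?thesis using L unfolding tendsto_cong[OF E] .
qed

lemma adj_exists:
  assumes T: "bounded_op T"
  shows "\<exists>S. bounded_op S \<and> (\<forall>x\<in>ell2. \<forall>y\<in>ell2. cinner (S x) y = cinner x (T y))"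
proof -
  obtain C where C: "C \<ge> 0" "\<And>x. x \<in> ell2 \<Longrightarrow> l2norm (T x) \<le> C * l2norm x"
    using bop_bound[OF T] by auto
  define W where "W x = (\<lambda>i. cinner (T (ev i)) x)" for x :: "'a vec"
  define S where "S x = (if x \<in> ell2 then W x else 0)" for x
  have Tev: "T (ev i) \<in> ell2" for i using T by (simp add: bop_ell2)
  have Wb: "W x \<in> ell2 \<and> l2norm (W x) \<le> C * l2norm x" if x: "x \<in> ell2" for x
  proof -
    have fin: "(\<Sum>i\<in>F. (cmod (W x i))^2) \<le> (C * l2norm x)^2" if F: "finite F" for F
    proof -
      define s where "s = (\<Sum>i\<in>F. (cmod (W x i))^2)"
      have s0: "s \<ge> 0" by (simp add: s_def sum_nonneg)
      have z: "tr F (W x) \<in> ell2" "(l2norm (tr F (W x)))^2 = s"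
        using ell2_fin_supp[of F "tr F (W x)"] F by (auto simp: tr_def s_def)
      have zn: "l2norm (tr F (W x)) = sqrt s"
        using real_sqrt_unique[OF z(2) l2norm_nonneg] by simp
      have "cinner x (T (tr F (W x))) = (\<Sum>i\<in>F. W x i * cinner x (T (ev i)))"
        by (rule cinner_op_tr[OF T F x])
      also have "\<dots> = (\<Sum>i\<in>F. complex_of_real ((cmod (W x i))^2))"
      proof (rule sum.cong)
        fix i
        have "cinner x (T (ev i)) = cnj (W x i)" by (simp add: W_def cinner_cnj)
        then show "W x i * cinner x (T (ev i)) = complex_of_real ((cmod (W x i))^2)"
          using complex_norm_square[of "W x i"] by simp
      qed simp
      also have "\<dots> = complex_of_real s" by (simp add: s_def)
      finally have eq: "cinner x (T (tr F (W x))) = complex_of_real s" .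
      have "s = cmod (cinner x (T (tr F (W x))))" using eq s0 by simp
      also have "\<dots> \<le> l2norm x * l2norm (T (tr F (W x)))"
        by (rule cinner_cs) (use x z T in \<open>auto simp: bop_ell2\<close>)
      also have "\<dots> \<le> l2norm x * (C * sqrt s)"
        using C(2)[OF z(1)] zn by (simp add: mult_left_mono l2norm_nonneg)
      finally have "s \<le> (C * l2norm x) * sqrt s" by (simp add: algebra_simps)
      then have "sqrt s * sqrt s \<le> (C * l2norm x) * sqrt s" using s0 by simp
      then have "sqrt s \<le> C * l2norm x \<or> s = 0"
      proof (cases "s = 0")
        case False
        then have "sqrt s > 0" using s0 by simp
        then show ?thesis using \<open>sqrt s * sqrt s \<le> (C * l2norm x) * sqrt s\<close>
          using mult_le_cancel_right_pos by blast
      qed simp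
      then show "s \<le> (C * l2norm x)^2"
      proof
        assume "sqrt s \<le> C * l2norm x"
        then have "(sqrt s)^2 \<le> (C * l2norm x)^2" by (rule power_mono) (simp add: s0)
        then show ?thesis using s0 by simp
      qed simp
    qed
    show ?thesis
      using ell2_boundI2[OF fin] C(1) l2norm_nonneg[of x] by auto
  qed
  have Sb: "bounded_op S"
    unfolding bounded_op_def
  proof (intro conjI ballI allI impI)
    show "S x \<in> ell2" if "x \<in> ell2" for x using Wb that by (simp add: S_def)
    show "S (x + y) = S x + S y" if "x \<in> ell2" "y \<in> ell2" for x y
      using that by (simp add: S_def W_def fun_eq_iff cinner_add_right Tev)
    show "S (scal a x) = scal a (S x)" if "x \<in> ell2" for x a
      using that ell2_scal[OF that, of a] by (simp add: S_def W_def cinner_scal_right) (simp add: scal_def)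
    show "\<exists>C. \<forall>x\<in>ell2. l2norm (S x) \<le> C * l2norm x"
      using Wb by (auto simp: S_def)
    show "S x = 0" if "x \<notin> ell2" for x using that by (simp add: S_def)
  qed
  have Sa: "cinner (S x) y = cinner x (T y)" if x: "x \<in> ell2" and y: "y \<in> ell2" for x y
  proof -
    define g where "g i = y i * cinner x (T (ev i))" for i
    have "cinner (S x) y = infsum (\<lambda>i. cnj (S x i) * y i) UNIV"
      by (simp only: cinner_def)
    also have "\<dots> = infsum g UNIV"
      unfolding g_def using x
      by (intro infsum_cong) (simp add: S_def W_def cinner_cnj mult.commute)
    finally have "cinner (S x) y = infsum g UNIV" .
    moreover have "g summable_on UNIV"
    proof -
      have "(\<lambda>i. cnj (S x i) * y i) summable_on UNIV"
        by (rule cinner_summable) (use Sb x y in \<open>auto simp: bop_ell2\<close>)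
      then show ?thesis unfolding g_def S_def using x
        by (simp add: W_def cinner_cnj mult.commute)
    qed
    ultimately have L1: "(sum g \<longlongrightarrow> cinner (S x) y) (finite_subsets_at_top UNIV)"
      using has_sum_def has_sum_infsum by metis
    have "((\<lambda>F. l2norm (T (tr F y) - T y)) \<longlongrightarrow> 0) (finite_subsets_at_top UNIV)"
      by (rule conv_op[OF T _ y tr_conv[OF y]]) (simp add: tr_ell2' y)
    then have L0: "((\<lambda>F. cinner x (T (tr F y))) \<longlongrightarrow> cinner x (T y)) (finite_subsets_at_top UNIV)"
      by (intro conv_inner_right) (auto simp: bop_ell2 T tr_ell2' y x)
    have E: "\<forall>\<^sub>F F in finite_subsets_at_top UNIV. cinner x (T (tr F y)) = sum g F"
      by (rule eventually_finite_subsets_at_top_weakI) (simp add: cinner_op_tr[OF T _ x] g_def)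
    have L2: "(sum g \<longlongrightarrow> cinner x (T y)) (finite_subsets_at_top UNIV)"
      using L0 unfolding tendsto_cong[OF E] .
    show ?thesis using tendsto_unique[OF finite_subsets_at_top_neq_bot L1 L2] .
  qed
  show ?thesis using Sb Sa by blast
qed


lemma adj_uniq:
  assumes "bounded_op S1" "bounded_op S2"
    and "\<forall>x\<in>ell2. \<forall>y\<in>ell2. cinner (S1 x) y = cinner x (T y)"
    and "\<forall>x\<in>ell2. \<forall>y\<in>ell2. cinner (S2 x) y = cinner x (T y)"
  shows "S1 = S2"
proof
  fix x
  show "S1 x = S2 x"
  proof (cases "x \<in> ell2")
    case True
    show ?thesis
      by (rule ell2_ext) (use assms True in \<open>auto simp: bop_ell2\<close>)
  next
    case False
    then show ?thesis using assms(1,2) by (simp add: bop_out)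
  qed
qed

lemma adj_char:
  assumes "bounded_op T"
  shows "bounded_op (adj T) \<and> (\<forall>x\<in>ell2. \<forall>y\<in>ell2. cinner (adj T x) y = cinner x (T y))"
proof -
  obtain S0 where S0: "bounded_op S0 \<and> (\<forall>x\<in>ell2. \<forall>y\<in>ell2. cinner (S0 x) y = cinner x (T y))"
    using adj_exists[OF assms] by blast
  show ?thesis unfolding adj_def
    by (rule theI[where P="\<lambda>S. bounded_op S \<and> (\<forall>x\<in>ell2. \<forall>y\<in>ell2. cinner (S x) y = cinner x (T y))", OF S0])
       (use S0 adj_uniq in blast)
qed

lemma adj_bounded: "bounded_op T \<Longrightarrow> bounded_op (adj T)"
  using adj_char by blast

lemma adj_inner: "bounded_op T \<Longrightarrow> x \<in> ell2 \<Longrightarrow> y \<in> ell2 \<Longrightarrow> cinner (adj T x) y = cinner x (T y)"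
  using adj_char by blast

lemma adj_inner': "bounded_op T \<Longrightarrow> x \<in> ell2 \<Longrightarrow> y \<in> ell2 \<Longrightarrow> cinner x (adj T y) = cinner (T x) y"
  by (metis adj_inner cinner_cnj)

lemma adj_eqI:
  assumes "bounded_op T" "bounded_op S"
    and "\<And>x y. x \<in> ell2 \<Longrightarrow> y \<in> ell2 \<Longrightarrow> cinner (S x) y = cinner x (T y)"
  shows "adj T = S"
  by (rule adj_uniq[OF adj_bounded[OF assms(1)] assms(2)]) (use assms adj_inner in auto)

lemma adj_adj: "bounded_op T \<Longrightarrow> adj (adj T) = T"
  by (rule adj_eqI) (auto simp: adj_bounded adj_inner')

lemma adj_comp:
  assumes S: "bounded_op S" and T: "bounded_op T"
  shows "adj (S \<circ> T) = adj T \<circ> adj S"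
proof (rule adj_eqI)
  show "bounded_op (S \<circ> T)" by (rule bop_comp[OF S T])
  show "bounded_op (adj T \<circ> adj S)" by (rule bop_comp[OF adj_bounded[OF T] adj_bounded[OF S]])
  fix x y :: "'a vec" assume x: "x \<in> ell2" and y: "y \<in> ell2"
  have "cinner ((adj T \<circ> adj S) x) y = cinner (adj S x) (T y)"
    using adj_inner[OF T _ y, of "adj S x"] x S by (simp add: bop_ell2 adj_bounded)
  also have "\<dots> = cinner x (S (T y))"
    using adj_inner[OF S x, of "T y"] y T by (simp add: bop_ell2)
  finally show "cinner ((adj T \<circ> adj S) x) y = cinner x ((S \<circ> T) y)" by simp
qed




lemma coord_le: "x \<in> ell2 \<Longrightarrow> cmod (x i) \<le> l2norm x"
proof -
  assume x: "x \<in> ell2"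
  have "(cmod (x i))^2 \<le> (l2norm x)^2" using ell2_fin[OF x, of "{i}"] by simp
  then show ?thesis using l2norm_nonneg power2_le_imp_le by blast
qed

lemma ell2_complete:
  assumes a: "\<And>n. a n \<in> ell2"
    and C: "\<And>e. e > 0 \<Longrightarrow> \<exists>N. \<forall>m\<ge>N. \<forall>n\<ge>N. l2norm (a m - a n) < e"
  shows "\<exists>b\<in>ell2. (\<lambda>n. l2norm (a n - b)) \<longlonglongrightarrow> 0"
proof -
  have "Cauchy (\<lambda>n. a n i)" for i
  proof (rule metric_CauchyI)
    fix e :: real assume "e > 0"
    then obtain N where N: "\<forall>m\<ge>N. \<forall>n\<ge>N. l2norm (a m - a n) < e" using C by blast
    have "dist (a m i) (a n i) < e" if "m \<ge> N" "n \<ge> N" for m n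
    proof -
      have "dist (a m i) (a n i) = cmod ((a m - a n) i)" by (simp add: dist_norm)
      also have "\<dots> \<le> l2norm (a m - a n)" by (rule coord_le[of "a m - a n"]) (simp add: a)
      moreover have "l2norm (a m - a n) < e" using N that by blast
      ultimately show ?thesis by linarith
    qed
    then show "\<exists>M. \<forall>m\<ge>M. \<forall>n\<ge>M. dist (a m i) (a n i) < e" by blast
  qed
  then have "convergent (\<lambda>n. a n i)" for i by (simp add: Cauchy_convergent_iff)
  then obtain b where b: "\<And>i. (\<lambda>n. a n i) \<longlonglongrightarrow> b i"
    unfolding convergent_def by metis
  have main: "a n - b \<in> ell2 \<and> l2norm (a n - b) \<le> e" if e: "e > 0" and n: "n \<ge> N"
    and N: "\<forall>m\<ge>N. \<forall>n\<ge>N. l2norm (a m - a n) < e" for e N n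
  proof -
    have fin: "(\<Sum>i\<in>F. (cmod ((a n - b) i))^2) \<le> e^2" if F: "finite F" for F
    proof -
      have lim: "(\<lambda>m. \<Sum>i\<in>F. (cmod (a n i - a m i))^2) \<longlonglongrightarrow> (\<Sum>i\<in>F. (cmod (a n i - b i))^2)"
        by (intro tendsto_intros b)
      have "(\<Sum>i\<in>F. (cmod (a n i - a m i))^2) \<le> e^2" if m: "m \<ge> N" for m
      proof -
        have "(\<Sum>i\<in>F. (cmod (a n i - a m i))^2) = (\<Sum>i\<in>F. (cmod ((a n - a m) i))^2)" by simp
        also have "\<dots> \<le> (l2norm (a n - a m))^2" by (rule ell2_fin[of "a n - a m"]) (simp_all add: a F)
        also have "\<dots> \<le> e^2" using N n m l2norm_nonneg[of "a n - a m"]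
          by (intro power_mono) (auto simp: less_imp_le)
        finally show ?thesis .
      qed
      then have "(\<Sum>i\<in>F. (cmod (a n i - b i))^2) \<le> e^2"
        by (intro LIMSEQ_le_const2[OF lim]) blast
      then show ?thesis by simp
    qed
    show ?thesis using ell2_boundI2[of "a n - b", OF fin] e by simp
  qed
  obtain N1 where N1: "\<forall>m\<ge>N1. \<forall>n\<ge>N1. l2norm (a m - a n) < 1" using C[of 1] by auto
  have "b = a N1 - (a N1 - b)" by simp
  then have bl: "b \<in> ell2" using main[OF _ order_refl N1] a[of N1] by (metis ell2_diff zero_less_one)
  have "(\<lambda>n. l2norm (a n - b)) \<longlonglongrightarrow> 0"
  proof (rule LIMSEQ_I)
    fix r :: real assume r: "r > 0"
    then obtain N where N: "\<forall>m\<ge>N. \<forall>n\<ge>N. l2norm (a m - a n) < r / 2" using C[of "r/2"] by auto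
    have "norm (l2norm (a n - b)) < r" if "n \<ge> N" for n
      using main[OF _ that N] r l2norm_nonneg[of "a n - b"] by simp
    then show "\<exists>no. \<forall>n\<ge>no. norm (l2norm (a n - b) - 0) < r" by auto
  qed
  then show ?thesis using bl by blast
qed


lemma sq_le_cancel: "0 \<le> (a::real) \<Longrightarrow> 0 \<le> c \<Longrightarrow> a^2 \<le> a * c \<Longrightarrow> a \<le> c"
  by (cases "a = 0") (auto simp: power2_eq_square)

lemma sum_split_lessThan:
  fixes f :: "nat \<Rightarrow> 'b::ab_group_add"
  assumes "n \<le> m"
  shows "(\<Sum>k<m. f k) - (\<Sum>k<n. f k) = (\<Sum>k\<in>{n..<m}. f k)"
proof -
  have "(\<Sum>k<m. f k) = (\<Sum>k\<in>{0..<n}. f k) + (\<Sum>k\<in>{n..<m}. f k)"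
    using sum.atLeastLessThan_concat[of 0 n m f] assms by (simp add: lessThan_atLeast0)
  then show ?thesis by (simp add: lessThan_atLeast0)
qed

lemma scal_sum: "scal a (sum f K) = (\<Sum>k\<in>K. scal a (f k))"
  by (induction K rule: infinite_finite_induct) (auto simp: scal_def fun_eq_iff distrib_left)

lemma conv_scal:
  assumes "\<And>n. u n \<in> ell2" "v \<in> ell2" "((\<lambda>n. l2norm (u n - v)) \<longlongrightarrow> 0) F"
  shows "((\<lambda>n. l2norm (scal a (u n) - scal a v)) \<longlongrightarrow> 0) F"
proof -
  have "scal a (u n) - scal a v = scal a (u n - v)" for n
    by (simp add: scal_def fun_eq_iff algebra_simps)
  then show ?thesis using tendsto_mult_right_zero[OF assms(3), of "cmod a"]
    by (simp add: l2norm_scal)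
qed

context
  fixes V :: "nat \<Rightarrow> 'i op"
  assumes V: "\<And>k. bounded_op (V k)"
    and TP: "\<forall>x\<in>ell2. (\<lambda>n. l2norm ((\<Sum>k<n. adj (V k) (V k x)) - x)) \<longlonglongrightarrow> 0"
begin

lemma Vx: "x \<in> ell2 \<Longrightarrow> V k x \<in> ell2"
  using V by (simp add: bop_ell2)

lemma adjV: "x \<in> ell2 \<Longrightarrow> adj (V k) x \<in> ell2"
  using V by (simp add: bop_ell2 adj_bounded)

lemma p_lim:
  assumes x: "x \<in> ell2"
  shows "(\<lambda>n. \<Sum>k<n. (l2norm (V k x))^2) \<longlonglongrightarrow> (l2norm x)^2"
proof -
  have eq: "cinner x (\<Sum>k<n. adj (V k) (V k x)) = complex_of_real (\<Sum>k<n. (l2norm (V k x))^2)" for n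
  proof -
    have "cinner x (\<Sum>k<n. adj (V k) (V k x)) = (\<Sum>k<n. cinner x (adj (V k) (V k x)))"
      by (rule cinner_sum_right) (simp_all add: x Vx adjV)
    also have "\<dots> = (\<Sum>k<n. cinner (V k x) (V k x))"
      by (rule sum.cong) (simp_all add: adj_inner' V x Vx)
    also have "\<dots> = complex_of_real (\<Sum>k<n. (l2norm (V k x))^2)"
      by (simp add: cinner_self)
    finally show ?thesis .
  qed
  have "(\<lambda>n. cinner x (\<Sum>k<n. adj (V k) (V k x))) \<longlonglongrightarrow> cinner x x"
    by (rule conv_inner_right) (use TP x in \<open>simp_all add: Vx adjV\<close>)
  then have "(\<lambda>n. complex_of_real (\<Sum>k<n. (l2norm (V k x))^2)) \<longlonglongrightarrow> complex_of_real ((l2norm x)^2)"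
    by (simp only: eq cinner_self)
  then show ?thesis by (simp only: tendsto_of_real_iff)
qed

lemma p_inc: "incseq (\<lambda>n. \<Sum>k<n. (l2norm (V k x))^2)"
  by (rule incseq_SucI) simp

lemma p_le: "x \<in> ell2 \<Longrightarrow> (\<Sum>k<n. (l2norm (V k x))^2) \<le> (l2norm x)^2"
  using incseq_le[OF p_inc p_lim] by blast

lemma pK_le:
  assumes x: "x \<in> ell2" and K: "finite K"
  shows "(\<Sum>k\<in>K. (l2norm (V k x))^2) \<le> (l2norm x)^2"
proof -
  obtain N where N: "K \<subseteq> {..<N}" using finite_nat_bounded[OF K] by blast
  have "(\<Sum>k\<in>K. (l2norm (V k x))^2) \<le> (\<Sum>k<N. (l2norm (V k x))^2)"
    by (rule sum_mono2) (use N in auto)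
  also have "\<dots> \<le> (l2norm x)^2" by (rule p_le[OF x])
  finally show ?thesis .
qed

lemma partial_bound:
  assumes B: "bounded_op B" and Cb: "Cb \<ge> 0" "\<And>x. x \<in> ell2 \<Longrightarrow> l2norm (B x) \<le> Cb * l2norm x"
    and x: "x \<in> ell2" and K: "finite K"
  shows "l2norm (\<Sum>k\<in>K. adj (V k) (B (V k x))) \<le> Cb * sqrt (\<Sum>k\<in>K. (l2norm (V k x))^2)"
proof -
  define u where "u = (\<Sum>k\<in>K. adj (V k) (B (V k x)))"
  have BV: "B (V k x) \<in> ell2" for k using B x by (simp add: bop_ell2 Vx)
  have u: "u \<in> ell2" unfolding u_def by (simp add: adjV BV)
  define t where "t = (\<Sum>k\<in>K. (l2norm (V k x))^2)"
  have t0: "t \<ge> 0" by (simp add: t_def sum_nonneg)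
  have "cinner u u = (\<Sum>k\<in>K. cinner u (adj (V k) (B (V k x))))"
    by (subst (2) u_def, rule cinner_sum_right) (simp_all add: u adjV BV)
  also have "\<dots> = (\<Sum>k\<in>K. cinner (V k u) (B (V k x)))"
    by (rule sum.cong) (simp_all add: adj_inner' V u BV)
  finally have cu: "cinner u u = (\<Sum>k\<in>K. cinner (V k u) (B (V k x)))" .
  have "(l2norm u)^2 = cmod (cinner u u)" by (simp add: cinner_self norm_power)
  also have "\<dots> \<le> (\<Sum>k\<in>K. cmod (cinner (V k u) (B (V k x))))"
    unfolding cu by (rule norm_sum)
  also have "\<dots> \<le> (\<Sum>k\<in>K. l2norm (V k u) * (Cb * l2norm (V k x)))"
  proof (rule sum_mono)
    fix k
    have "cmod (cinner (V k u) (B (V k x))) \<le> l2norm (V k u) * l2norm (B (V k x))"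
      by (rule cinner_cs) (simp_all add: Vx u BV)
    also have "\<dots> \<le> l2norm (V k u) * (Cb * l2norm (V k x))"
      by (rule mult_left_mono) (simp_all add: Cb Vx x l2norm_nonneg)
    finally show "cmod (cinner (V k u) (B (V k x))) \<le> l2norm (V k u) * (Cb * l2norm (V k x))" .
  qed
  also have "\<dots> = Cb * (\<Sum>k\<in>K. \<bar>l2norm (V k u)\<bar> * \<bar>l2norm (V k x)\<bar>)"
    by (simp add: sum_distrib_left l2norm_nonneg mult_ac)
  also have "\<dots> \<le> Cb * (L2_set (\<lambda>k. l2norm (V k u)) K * L2_set (\<lambda>k. l2norm (V k x)) K)"
    by (rule mult_left_mono[OF L2_set_mult_ineq Cb(1)])
  also have "\<dots> \<le> Cb * (l2norm u * sqrt t)"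
  proof (rule mult_left_mono[OF _ Cb(1)])
    have "L2_set (\<lambda>k. l2norm (V k u)) K \<le> l2norm u"
      unfolding L2_set_def using pK_le[OF u K] l2norm_nonneg[of u] by (simp add: real_le_lsqrt)
    moreover have "L2_set (\<lambda>k. l2norm (V k x)) K = sqrt t" by (simp add: L2_set_def t_def)
    ultimately show "L2_set (\<lambda>k. l2norm (V k u)) K * L2_set (\<lambda>k. l2norm (V k x)) K \<le> l2norm u * sqrt t"
      using mult_right_mono[of _ _ "sqrt t"] t0 by simp
  qed
  finally have "(l2norm u)^2 \<le> l2norm u * (Cb * sqrt t)" by (simp add: mult_ac)
  then have "l2norm u \<le> Cb * sqrt t"
    using sq_le_cancel[of "l2norm u" "Cb * sqrt t"] l2norm_nonneg[of u] Cb(1) t0 by simp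
  then show ?thesis by (simp add: u_def t_def)
qed


lemma ksum_ell2:
  "bounded_op B \<Longrightarrow> x \<in> ell2 \<Longrightarrow> (\<Sum>k\<in>K. adj (V k) (B (V k x))) \<in> ell2"
  by (simp add: adjV bop_ell2 Vx)

lemma ksum_cauchy:
  assumes B: "bounded_op B" and x: "x \<in> ell2"
  shows "\<exists>b\<in>ell2. (\<lambda>n. l2norm ((\<Sum>k<n. adj (V k) (B (V k x))) - b)) \<longlonglongrightarrow> 0"
proof (rule ell2_complete)
  show "\<And>n. (\<Sum>k<n. adj (V k) (B (V k x))) \<in> ell2" by (rule ksum_ell2[OF B x])
  obtain Cb where Cb: "Cb \<ge> 0" "\<And>x. x \<in> ell2 \<Longrightarrow> l2norm (B x) \<le> Cb * l2norm x"
    using bop_bound[OF B] by auto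
  define p where "p n = (\<Sum>k<n. (l2norm (V k x))^2)" for n
  define L where "L = (l2norm x)^2"
  have pl: "p \<longlonglongrightarrow> L" unfolding p_def[abs_def] L_def by (rule p_lim[OF x])
  have pL: "p n \<le> L" for n unfolding p_def L_def by (rule p_le[OF x])
  fix e :: real assume e: "e > 0"
  define d where "d = (e / (Cb + 1))^2"
  have d: "d > 0" using e Cb by (simp add: d_def)
  obtain N where N: "\<And>n. n \<ge> N \<Longrightarrow> dist (p n) L < d"
    using pl d unfolding lim_sequentially by blast
  have one: "l2norm ((\<Sum>k<m. adj (V k) (B (V k x))) - (\<Sum>k<n. adj (V k) (B (V k x)))) < e"
    if nm: "n \<le> m" "N \<le> n" for n m
  proof -
    have "(\<Sum>k<m. adj (V k) (B (V k x))) - (\<Sum>k<n. adj (V k) (B (V k x)))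
        = (\<Sum>k\<in>{n..<m}. adj (V k) (B (V k x)))" by (rule sum_split_lessThan[OF nm(1)])
    moreover have "l2norm (\<Sum>k\<in>{n..<m}. adj (V k) (B (V k x))) \<le> Cb * sqrt (\<Sum>k\<in>{n..<m}. (l2norm (V k x))^2)"
      by (rule partial_bound[OF B Cb x finite_atLeastLessThan])
    moreover have "(\<Sum>k\<in>{n..<m}. (l2norm (V k x))^2) = p m - p n"
      unfolding p_def by (rule sum_split_lessThan[OF nm(1), symmetric])
    moreover have "p m - p n < d"
      using N[OF nm(2)] pL[of m] by (simp add: dist_real_def)
    moreover have "Cb * sqrt d < e"
    proof -
      have "sqrt d = e / (Cb + 1)" using e Cb by (simp add: d_def)
      then have "Cb * sqrt d = e * (Cb / (Cb + 1))" by simp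
      also have "\<dots> < e * 1" using e Cb by (intro mult_strict_left_mono) auto
      finally show ?thesis by simp
    qed
    moreover have "Cb * sqrt (p m - p n) \<le> Cb * sqrt d"
      using \<open>p m - p n < d\<close> Cb by (intro mult_left_mono) auto
    ultimately show ?thesis by simp
  qed
  show "\<exists>N. \<forall>m\<ge>N. \<forall>n\<ge>N. l2norm ((\<Sum>k<m. adj (V k) (B (V k x))) - (\<Sum>k<n. adj (V k) (B (V k x)))) < e"
  proof (intro exI allI impI)
    fix m n assume "N \<le> m" "N \<le> n"
    then show "l2norm ((\<Sum>k<m. adj (V k) (B (V k x))) - (\<Sum>k<n. adj (V k) (B (V k x)))) < e"
      using one[of n m] one[of m n] l2norm_commute[of "\<Sum>k<m. adj (V k) (B (V k x))" "\<Sum>k<n. adj (V k) (B (V k x))"] by (cases "n \<le> m") auto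
  qed
qed


lemma ksum_add:
  assumes B: "bounded_op B" and x: "x \<in> ell2" and y: "y \<in> ell2"
  shows "(\<Sum>k<n. adj (V k) (B (V k (x + y)))) = (\<Sum>k<n. adj (V k) (B (V k x))) + (\<Sum>k<n. adj (V k) (B (V k y)))"
proof -
  have "adj (V k) (B (V k (x + y))) = adj (V k) (B (V k x)) + adj (V k) (B (V k y))" for k
  proof -
    have "V k (x + y) = V k x + V k y" using V x y by (rule bop_add)
    moreover have "B (V k x + V k y) = B (V k x) + B (V k y)" using B Vx[OF x] Vx[OF y] by (rule bop_add)
    moreover have "adj (V k) (B (V k x) + B (V k y)) = adj (V k) (B (V k x)) + adj (V k) (B (V k y))"
      using adj_bounded[OF V] bop_ell2[OF B Vx[OF x]] bop_ell2[OF B Vx[OF y]] by (rule bop_add)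
    ultimately show ?thesis by simp
  qed
  then show ?thesis by (simp add: sum.distrib)
qed

lemma ksum_scal:
  assumes B: "bounded_op B" and x: "x \<in> ell2"
  shows "(\<Sum>k<n. adj (V k) (B (V k (scal a x)))) = scal a (\<Sum>k<n. adj (V k) (B (V k x)))"
proof -
  have "adj (V k) (B (V k (scal a x))) = scal a (adj (V k) (B (V k x)))" for k
    using V B adj_bounded[OF V] x by (simp add: bop_scal bop_ell2 Vx)
  then show ?thesis by (simp add: scal_sum)
qed

lemma kraus_exists:
  assumes B: "bounded_op B"
  shows "\<exists>T. bounded_op T \<and> (\<forall>x\<in>ell2. (\<lambda>n. l2norm ((\<Sum>k<n. adj (V k) (B (V k x))) - T x)) \<longlonglongrightarrow> 0)"
proof -
  define T where "T x = (if x \<in> ell2 then (SOME b. b \<in> ell2 \<and>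
      (\<lambda>n. l2norm ((\<Sum>k<n. adj (V k) (B (V k x))) - b)) \<longlonglongrightarrow> 0) else 0)" for x
  have Tc: "T x \<in> ell2 \<and> (\<lambda>n. l2norm ((\<Sum>k<n. adj (V k) (B (V k x))) - T x)) \<longlonglongrightarrow> 0"
    if x: "x \<in> ell2" for x
  proof -
    have "\<exists>b. b \<in> ell2 \<and> (\<lambda>n. l2norm ((\<Sum>k<n. adj (V k) (B (V k x))) - b)) \<longlonglongrightarrow> 0"
      using ksum_cauchy[OF B x] by blast
    then have "(SOME b. b \<in> ell2 \<and> (\<lambda>n. l2norm ((\<Sum>k<n. adj (V k) (B (V k x))) - b)) \<longlonglongrightarrow> 0) \<in> ell2 \<and>
      (\<lambda>n. l2norm ((\<Sum>k<n. adj (V k) (B (V k x))) - (SOME b. b \<in> ell2 \<and> (\<lambda>n. l2norm ((\<Sum>k<n. adj (V k) (B (V k x))) - b)) \<longlonglongrightarrow> 0))) \<longlonglongrightarrow> 0"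
      by (rule someI_ex)
    then show ?thesis by (simp add: T_def x)
  qed
  have ks: "(\<Sum>k<n. adj (V k) (B (V k x))) \<in> ell2" if "x \<in> ell2" for x n
    by (rule ksum_ell2[OF B that])
  obtain Cb where Cb: "Cb \<ge> 0" "\<And>x. x \<in> ell2 \<Longrightarrow> l2norm (B x) \<le> Cb * l2norm x"
    using bop_bound[OF B] by auto
  have "bounded_op T"
    unfolding bounded_op_def
  proof (intro conjI ballI allI impI)
    show "T x \<in> ell2" if "x \<in> ell2" for x using Tc[OF that] by blast
    show "T x = 0" if "x \<notin> ell2" for x using that by (simp add: T_def)
    show "T (x + y) = T x + T y" if x: "x \<in> ell2" and y: "y \<in> ell2" for x y
    proof (rule conv_unique[OF trivial_limit_sequentially])
      show "\<And>n. (\<Sum>k<n. adj (V k) (B (V k (x + y)))) \<in> ell2" by (rule ks) (simp add: x y)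
      show "T (x + y) \<in> ell2" "T x + T y \<in> ell2" using Tc x y by auto
      show "(\<lambda>n. l2norm ((\<Sum>k<n. adj (V k) (B (V k (x + y)))) - T (x + y))) \<longlonglongrightarrow> 0"
        using Tc[of "x + y"] x y by simp
      show "(\<lambda>n. l2norm ((\<Sum>k<n. adj (V k) (B (V k (x + y)))) - (T x + T y))) \<longlonglongrightarrow> 0"
        unfolding ksum_add[OF B x y]
        by (rule conv_add) (use Tc x y ks in auto)
    qed
    show "T (scal a x) = scal a (T x)" if x: "x \<in> ell2" for x a
    proof (rule conv_unique[OF trivial_limit_sequentially])
      show "\<And>n. (\<Sum>k<n. adj (V k) (B (V k (scal a x)))) \<in> ell2" by (rule ks) (simp add: x)
      show "T (scal a x) \<in> ell2" "scal a (T x) \<in> ell2" using Tc x by auto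
      show "(\<lambda>n. l2norm ((\<Sum>k<n. adj (V k) (B (V k (scal a x)))) - T (scal a x))) \<longlonglongrightarrow> 0"
        using Tc[of "scal a x"] x by simp
      show "(\<lambda>n. l2norm ((\<Sum>k<n. adj (V k) (B (V k (scal a x)))) - scal a (T x))) \<longlonglongrightarrow> 0"
        unfolding ksum_scal[OF B x]
        by (rule conv_scal) (use Tc x ks in auto)
    qed
    show "\<exists>C. \<forall>x\<in>ell2. l2norm (T x) \<le> C * l2norm x"
    proof (intro exI ballI)
      fix x :: "'i vec" assume x: "x \<in> ell2"
      have kb: "l2norm (\<Sum>k<n. adj (V k) (B (V k x))) \<le> Cb * l2norm x" for n
      proof -
        have "l2norm (\<Sum>k<n. adj (V k) (B (V k x))) \<le> Cb * sqrt (\<Sum>k<n. (l2norm (V k x))^2)"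
          by (rule partial_bound[OF B Cb x finite_lessThan])
        also have "\<dots> \<le> Cb * l2norm x"
          using p_le[OF x, of n] Cb(1) l2norm_nonneg[of x]
          by (intro mult_left_mono) (auto simp: real_sqrt_le_iff real_le_lsqrt)
        finally show ?thesis .
      qed
      have le: "l2norm (T x) \<le> l2norm ((\<Sum>k<n. adj (V k) (B (V k x))) - T x) + Cb * l2norm x" for n
      proof -
        have "T x = (T x - (\<Sum>k<n. adj (V k) (B (V k x)))) + (\<Sum>k<n. adj (V k) (B (V k x)))" by simp
        then have "l2norm (T x) \<le> l2norm (T x - (\<Sum>k<n. adj (V k) (B (V k x)))) + l2norm (\<Sum>k<n. adj (V k) (B (V k x)))"
          using l2norm_triangle[of "T x - (\<Sum>k<n. adj (V k) (B (V k x)))" "\<Sum>k<n. adj (V k) (B (V k x))"]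
            Tc[OF x] ks[OF x] by (metis ell2_diff)
        then show ?thesis using kb[of n] l2norm_commute[of "T x" "\<Sum>k<n. adj (V k) (B (V k x))"] by linarith
      qed
      have "(\<lambda>n. l2norm ((\<Sum>k<n. adj (V k) (B (V k x))) - T x) + Cb * l2norm x) \<longlonglongrightarrow> 0 + Cb * l2norm x"
        by (intro tendsto_add tendsto_const) (use Tc[OF x] in blast)
      then have lim: "(\<lambda>n. l2norm ((\<Sum>k<n. adj (V k) (B (V k x))) - T x) + Cb * l2norm x) \<longlonglongrightarrow> Cb * l2norm x"
        by simp
      show "l2norm (T x) \<le> Cb * l2norm x"
        by (rule LIMSEQ_le_const[OF lim]) (use le in blast)
    qed
  qed
  then show ?thesis using Tc by blast
qed

lemma kraus_char:
  assumes B: "bounded_op B"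
  shows "bounded_op (kraus V B) \<and>
    (\<forall>x\<in>ell2. (\<lambda>n. l2norm ((\<Sum>k<n. adj (V k) (B (V k x))) - kraus V B x)) \<longlonglongrightarrow> 0)"
proof -
  let ?P = "\<lambda>T. bounded_op T \<and> (\<forall>x\<in>ell2. (\<lambda>n. l2norm ((\<Sum>k<n. adj (V k) (B (V k x))) - T x)) \<longlonglongrightarrow> 0)"
  obtain T0 where T0: "?P T0" using kraus_exists[OF B] by blast
  have uniq: "T1 = T0" if T1: "?P T1" for T1
  proof
    fix x show "T1 x = T0 x"
    proof (cases "x \<in> ell2")
      case True
      show ?thesis
        by (rule conv_unique[OF trivial_limit_sequentially, of "\<lambda>n. \<Sum>k<n. adj (V k) (B (V k x))"])
           (use T0 T1 True ksum_ell2[OF B True] in \<open>auto simp: bop_ell2\<close>)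
    next
      case False
      then show ?thesis using T0 T1 by (simp add: bop_out)
    qed
  qed
  show ?thesis unfolding kraus_def by (rule theI[where P="?P", OF T0 uniq])
qed

end




lemma op_eq_weak:
  assumes P: "bounded_op P" and Q: "bounded_op Q"
    and w: "\<And>x y. x \<in> ell2 \<Longrightarrow> y \<in> ell2 \<Longrightarrow> cinner (P x) y = cinner (Q x) y"
  shows "P = Q"
proof
  fix x show "P x = Q x"
  proof (cases "x \<in> ell2")
    case True
    show ?thesis by (rule ell2_ext) (use P Q True w in \<open>auto simp: bop_ell2\<close>)
  next
    case False
    then show ?thesis using P Q by (simp add: bop_out)
  qed
qed

context
  fixes V :: "nat \<Rightarrow> 'i op"
  assumes V: "\<And>k. bounded_op (V k)"
    and TP: "\<forall>x\<in>ell2. (\<lambda>n. l2norm ((\<Sum>k<n. adj (V k) (V k x)) - x)) \<longlonglongrightarrow> 0"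
begin

lemma Vx': "x \<in> ell2 \<Longrightarrow> V k x \<in> ell2"
  using V by (simp add: bop_ell2)

lemma kraus_bounded: "bounded_op B \<Longrightarrow> bounded_op (kraus V B)"
  using kraus_char[OF V TP] by blast

lemma kraus_weak:
  assumes B: "bounded_op B" and x: "x \<in> ell2" and y: "y \<in> ell2"
  shows "(\<lambda>n. \<Sum>k<n. cinner (B (V k x)) (V k y)) \<longlonglongrightarrow> cinner (kraus V B x) y"
proof -
  have "(\<lambda>n. cinner (\<Sum>k<n. adj (V k) (B (V k x))) y) \<longlonglongrightarrow> cinner (kraus V B x) y"
    by (rule conv_inner) (use kraus_char[OF V TP B] x y ksum_ell2[OF V TP B x] in \<open>auto simp: bop_ell2\<close>)
  moreover have "cinner (\<Sum>k<n. adj (V k) (B (V k x))) y = (\<Sum>k<n. cinner (B (V k x)) (V k y))" for n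
  proof -
    have "cinner (\<Sum>k<n. adj (V k) (B (V k x))) y = (\<Sum>k<n. cinner (adj (V k) (B (V k x))) y)"
      by (rule cinner_sum_left) (use y V B x in \<open>auto simp: bop_ell2 adj_bounded Vx'\<close>)
    also have "\<dots> = (\<Sum>k<n. cinner (B (V k x)) (V k y))"
      by (rule sum.cong) (use y V B x in \<open>auto simp: bop_ell2 adj_inner Vx'\<close>)
    finally show ?thesis .
  qed
  ultimately show ?thesis by simp
qed

lemma id_weak:
  assumes x: "x \<in> ell2" and y: "y \<in> ell2"
  shows "(\<lambda>n. \<Sum>k<n. cinner (V k x) (V k y)) \<longlonglongrightarrow> cinner x y"
proof -
  have "(\<lambda>n. cinner (\<Sum>k<n. adj (V k) (V k x)) y) \<longlonglongrightarrow> cinner x y"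
    by (rule conv_inner) (use TP x y V in \<open>auto simp: bop_ell2 adj_bounded Vx'\<close>)
  moreover have "cinner (\<Sum>k<n. adj (V k) (V k x)) y = (\<Sum>k<n. cinner (V k x) (V k y))" for n
  proof -
    have "cinner (\<Sum>k<n. adj (V k) (V k x)) y = (\<Sum>k<n. cinner (adj (V k) (V k x)) y)"
      by (rule cinner_sum_left) (use y V x in \<open>auto simp: bop_ell2 adj_bounded Vx'\<close>)
    also have "\<dots> = (\<Sum>k<n. cinner (V k x) (V k y))"
      by (rule sum.cong) (use y V x in \<open>auto simp: adj_inner Vx'\<close>)
    finally show ?thesis .
  qed
  ultimately show ?thesis by simp
qed

lemma kraus_adj:
  assumes A: "bounded_op A"
  shows "kraus V (adj A) = adj (kraus V A)"
proof (rule adj_eqI[symmetric])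
  show "bounded_op (kraus V A)" by (rule kraus_bounded[OF A])
  show "bounded_op (kraus V (adj A))" by (rule kraus_bounded[OF adj_bounded[OF A]])
  fix x y :: "'i vec" assume x: "x \<in> ell2" and y: "y \<in> ell2"
  have L1: "(\<lambda>n. \<Sum>k<n. cinner (adj A (V k x)) (V k y)) \<longlonglongrightarrow> cinner (kraus V (adj A) x) y"
    by (rule kraus_weak[OF adj_bounded[OF A] x y])
  have "(\<lambda>n. cnj (\<Sum>k<n. cinner (A (V k y)) (V k x))) \<longlonglongrightarrow> cnj (cinner (kraus V A y) x)"
    by (intro tendsto_cnj kraus_weak[OF A y x])
  moreover have "cnj (\<Sum>k<n. cinner (A (V k y)) (V k x)) = (\<Sum>k<n. cinner (adj A (V k x)) (V k y))" for n
    by (simp add: cinner_cnj adj_inner A Vx' x y)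
  ultimately have L2: "(\<lambda>n. \<Sum>k<n. cinner (adj A (V k x)) (V k y)) \<longlonglongrightarrow> cinner x (kraus V A y)"
    by (simp add: cinner_cnj)
  show "cinner (kraus V (adj A) x) y = cinner x (kraus V A y)"
    using tendsto_unique[OF trivial_limit_sequentially L1 L2] .
qed


lemma md_intertw:
  assumes A: "bounded_op A"
    and P1: "kraus V (adj A \<circ> A) = adj (kraus V A) \<circ> kraus V A"
  shows "A \<circ> V j = V j \<circ> kraus V A"
proof
  fix x
  let ?F = "kraus V A"
  have F: "bounded_op ?F" by (rule kraus_bounded[OF A])
  show "(A \<circ> V j) x = (V j \<circ> ?F) x"
  proof (cases "x \<in> ell2")
    case False
    have e1: "V j x = 0" by (rule bop_out[OF V False])
    have e2: "?F x = 0" by (rule bop_out[OF F False])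
    have "(A \<circ> V j) x = A 0" by (simp only: comp_apply e1)
    also have "\<dots> = 0" by (rule bop_zero[OF A])
    also have "\<dots> = V j 0" by (rule bop_zero[OF V, symmetric])
    also have "\<dots> = (V j \<circ> ?F) x" by (simp only: comp_apply e2)
    finally show ?thesis .
  next
    case x: True
    define z where "z = ?F x"
    have z: "z \<in> ell2" unfolding z_def using F x by (simp add: bop_ell2)
    have AV: "A (V k x) \<in> ell2" for k using A x by (simp add: bop_ell2 Vx')
    have Vz: "V k z \<in> ell2" for k using z by (simp add: Vx')
    define w where "w k = A (V k x) - V k z" for k
    have w: "w k \<in> ell2" for k by (simp add: w_def AV Vz)
    have ww: "cinner (w k) (w k) = cinner (A (V k x)) (A (V k x)) - cinner (A (V k x)) (V k z)
        - cinner (V k z) (A (V k x)) + cinner (V k z) (V k z)" for k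
      unfolding w_def using AV Vz by (simp add: cinner_diff_left cinner_diff_right)
    have La: "(\<lambda>n. \<Sum>k<n. cinner (A (V k x)) (A (V k x))) \<longlonglongrightarrow> cinner z z"
    proof -
      have AA: "bounded_op (adj A \<circ> A)" by (rule bop_comp[OF adj_bounded[OF A] A])
      have "(\<lambda>n. \<Sum>k<n. cinner ((adj A \<circ> A) (V k x)) (V k x)) \<longlonglongrightarrow> cinner (kraus V (adj A \<circ> A) x) x"
        by (rule kraus_weak[OF AA x x])
      moreover have "cinner ((adj A \<circ> A) (V k x)) (V k x) = cinner (A (V k x)) (A (V k x))" for k
        using adj_inner[OF A AV[of k] Vx'[OF x, of k]] by simp
      moreover have "cinner (kraus V (adj A \<circ> A) x) x = cinner z z"
        unfolding P1 z_def using adj_inner[OF F, of "?F x" x] F x by (simp add: bop_ell2)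
      ultimately show ?thesis by simp
    qed
    have Lb: "(\<lambda>n. \<Sum>k<n. cinner (A (V k x)) (V k z)) \<longlonglongrightarrow> cinner z z"
      using kraus_weak[OF A x z] by (simp add: z_def)
    have Lc: "(\<lambda>n. \<Sum>k<n. cinner (V k z) (A (V k x))) \<longlonglongrightarrow> cinner z z"
    proof -
      have "(\<lambda>n. cnj (\<Sum>k<n. cinner (A (V k x)) (V k z))) \<longlonglongrightarrow> cnj (cinner z z)"
        by (intro tendsto_cnj Lb)
      then show ?thesis by (simp add: cinner_cnj)
    qed
    have Ld: "(\<lambda>n. \<Sum>k<n. cinner (V k z) (V k z)) \<longlonglongrightarrow> cinner z z"
      by (rule id_weak[OF z z])
    have "(\<lambda>n. (\<Sum>k<n. cinner (A (V k x)) (A (V k x))) - (\<Sum>k<n. cinner (A (V k x)) (V k z))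
        - (\<Sum>k<n. cinner (V k z) (A (V k x))) + (\<Sum>k<n. cinner (V k z) (V k z)))
        \<longlonglongrightarrow> cinner z z - cinner z z - cinner z z + cinner z z"
      by (intro tendsto_intros La Lb Lc Ld)
    then have "(\<lambda>n. \<Sum>k<n. cinner (w k) (w k)) \<longlonglongrightarrow> 0"
      by (simp add: ww sum.distrib sum_subtractf)
    then have "(\<lambda>n. complex_of_real (\<Sum>k<n. (l2norm (w k))^2)) \<longlonglongrightarrow> complex_of_real 0"
      by (simp add: cinner_self)
    then have lim0: "(\<lambda>n. \<Sum>k<n. (l2norm (w k))^2) \<longlonglongrightarrow> 0"
      by (simp only: tendsto_of_real_iff)
    have inc: "incseq (\<lambda>n. \<Sum>k<n. (l2norm (w k))^2)"
      by (rule incseq_SucI) simp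
    have "(\<Sum>k<Suc j. (l2norm (w k))^2) \<le> 0"
      using incseq_le[OF inc lim0] by blast
    moreover have "(l2norm (w j))^2 \<le> (\<Sum>k<Suc j. (l2norm (w k))^2)"
      by (rule member_le_sum) auto
    ultimately have "(l2norm (w j))^2 \<le> 0" by linarith
    then have "l2norm (w j) = 0" by simp
    then have "w j = 0" using l2norm_eq0 w by blast
    then show ?thesis by (simp add: w_def z_def)
  qed
qed


lemma md_comm:
  assumes A: "bounded_op A"
    and P1: "kraus V (adj A \<circ> A) = adj (kraus V A) \<circ> kraus V A"
    and P2: "kraus V (A \<circ> adj A) = kraus V A \<circ> adj (kraus V A)"
  shows "A \<circ> (V j \<circ> adj (V k)) = (V j \<circ> adj (V k)) \<circ> A"
proof -
  let ?F = "kraus V A"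
  have F: "bounded_op ?F" by (rule kraus_bounded[OF A])
  have A': "bounded_op (adj A)" by (rule adj_bounded[OF A])
  have h1: "A \<circ> V j = V j \<circ> ?F" by (rule md_intertw[OF A P1])
  have kA': "kraus V (adj A) = adj ?F" by (rule kraus_adj[OF A])
  have P1': "kraus V (adj (adj A) \<circ> adj A) = adj (kraus V (adj A)) \<circ> kraus V (adj A)"
    unfolding kA' adj_adj[OF A] adj_adj[OF F] by (rule P2)
  have h2: "adj A \<circ> V k = V k \<circ> adj ?F"
    using md_intertw[OF A' P1'] unfolding kA' .
  have h3: "adj (V k) \<circ> A = ?F \<circ> adj (V k)"
  proof -
    have "adj (adj A \<circ> V k) = adj (V k \<circ> adj ?F)" using h2 by simp
    then show ?thesis
      by (simp add: adj_comp A' V adj_bounded F adj_adj A)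
  qed
  have "A \<circ> (V j \<circ> adj (V k)) = (A \<circ> V j) \<circ> adj (V k)" by (simp add: o_assoc)
  also have "\<dots> = V j \<circ> (?F \<circ> adj (V k))" by (simp add: h1 o_assoc)
  also have "\<dots> = V j \<circ> (adj (V k) \<circ> A)" by (simp add: h3)
  also have "\<dots> = (V j \<circ> adj (V k)) \<circ> A" by (simp add: o_assoc)
  finally show ?thesis .
qed

lemma comm_intertw:
  assumes A: "bounded_op A"
    and C: "\<And>j k. A \<circ> (V j \<circ> adj (V k)) = (V j \<circ> adj (V k)) \<circ> A"
  shows "A \<circ> V k = V k \<circ> kraus V A"
proof
  fix x
  let ?F = "kraus V A"
  have F: "bounded_op ?F" by (rule kraus_bounded[OF A])
  show "(A \<circ> V k) x = (V k \<circ> ?F) x"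
  proof (cases "x \<in> ell2")
    case False
    have e1: "V k x = 0" by (rule bop_out[OF V False])
    have e2: "?F x = 0" by (rule bop_out[OF F False])
    have "(A \<circ> V k) x = A 0" by (simp only: comp_apply e1)
    also have "\<dots> = 0" by (rule bop_zero[OF A])
    also have "\<dots> = V k 0" by (rule bop_zero[OF V, symmetric])
    also have "\<dots> = (V k \<circ> ?F) x" by (simp only: comp_apply e2)
    finally show ?thesis .
  next
    case x: True
    have AVk: "bounded_op (A \<circ> V k)" by (rule bop_comp[OF A V])
    define S where "S n = (\<Sum>j<n. adj (V j) (A (V j x)))" for n
    define T where "T n = (\<Sum>j<n. adj (V j) (V j x))" for n
    have S: "S n \<in> ell2" for n unfolding S_def by (rule ksum_ell2[OF V TP A x])
    have T: "T n \<in> ell2" for n unfolding T_def using x V by (simp add: bop_ell2 adj_bounded)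
    have eq: "V k (S n) = (A \<circ> V k) (T n)" for n
    proof -
      have "V k (S n) = (\<Sum>j<n. V k (adj (V j) (A (V j x))))"
        unfolding S_def by (rule bop_sum[OF V]) (use x V A in \<open>simp add: bop_ell2 adj_bounded\<close>)
      also have "\<dots> = (\<Sum>j<n. A (V k (adj (V j) (V j x))))"
      proof (rule sum.cong)
        fix j
        have "(A \<circ> (V k \<circ> adj (V j))) (V j x) = ((V k \<circ> adj (V j)) \<circ> A) (V j x)" by (simp only: C)
        then show "V k (adj (V j) (A (V j x))) = A (V k (adj (V j) (V j x)))" by simp
      qed simp
      also have "\<dots> = (A \<circ> V k) (T n)"
        unfolding T_def using bop_sum[OF AVk, of "{..<n}" "\<lambda>j. adj (V j) (V j x)"] x V
        by (simp add: bop_ell2 adj_bounded)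
      finally show ?thesis .
    qed
    have c1: "(\<lambda>n. l2norm (V k (S n) - V k (?F x))) \<longlonglongrightarrow> 0"
      by (rule conv_op[OF V S]) (use kraus_char[OF V TP A] x F in \<open>auto simp: S_def bop_ell2\<close>)
    have c2: "(\<lambda>n. l2norm ((A \<circ> V k) (T n) - (A \<circ> V k) x)) \<longlonglongrightarrow> 0"
      by (rule conv_op[OF AVk T x]) (use TP x in \<open>auto simp: T_def\<close>)
    have "V k (?F x) = (A \<circ> V k) x"
      by (rule conv_unique[OF trivial_limit_sequentially, of "\<lambda>n. V k (S n)"])
         (use c1 c2 eq S T F x V A in \<open>auto simp: bop_ell2\<close>)
    then show ?thesis by simp
  qed
qed

lemma comm_P1:
  assumes A: "bounded_op A"
    and C: "\<And>j k. A \<circ> (V j \<circ> adj (V k)) = (V j \<circ> adj (V k)) \<circ> A"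
  shows "kraus V (adj A \<circ> A) = adj (kraus V A) \<circ> kraus V A"
proof (rule op_eq_weak)
  let ?F = "kraus V A"
  have F: "bounded_op ?F" by (rule kraus_bounded[OF A])
  have AA: "bounded_op (adj A \<circ> A)" by (rule bop_comp[OF adj_bounded[OF A] A])
  show "bounded_op (kraus V (adj A \<circ> A))" by (rule kraus_bounded[OF AA])
  show "bounded_op (adj ?F \<circ> ?F)" by (rule bop_comp[OF adj_bounded[OF F] F])
  fix x y :: "'i vec" assume x: "x \<in> ell2" and y: "y \<in> ell2"
  have I: "A (V k u) = V k (?F u)" for k u using comm_intertw[OF A C, of k] by (metis comp_apply)
  have L1: "(\<lambda>n. \<Sum>k<n. cinner ((adj A \<circ> A) (V k x)) (V k y)) \<longlonglongrightarrow> cinner (kraus V (adj A \<circ> A) x) y"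
    by (rule kraus_weak[OF AA x y])
  have "cinner ((adj A \<circ> A) (V k x)) (V k y) = cinner (V k (?F x)) (V k (?F y))" for k
  proof -
    have "cinner ((adj A \<circ> A) (V k x)) (V k y) = cinner (A (V k x)) (A (V k y))"
      using adj_inner[OF A _ Vx'[OF y], of "A (V k x)"] A x by (simp add: bop_ell2 Vx')
    then show ?thesis by (simp add: I)
  qed
  then have L1': "(\<lambda>n. \<Sum>k<n. cinner (V k (?F x)) (V k (?F y))) \<longlonglongrightarrow> cinner (kraus V (adj A \<circ> A) x) y"
    using L1 by simp
  have L2: "(\<lambda>n. \<Sum>k<n. cinner (V k (?F x)) (V k (?F y))) \<longlonglongrightarrow> cinner (?F x) (?F y)"
    by (rule id_weak) (use F x y in \<open>auto simp: bop_ell2\<close>)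
  have "cinner (kraus V (adj A \<circ> A) x) y = cinner (?F x) (?F y)"
    using tendsto_unique[OF trivial_limit_sequentially L1' L2] .
  also have "\<dots> = cinner ((adj ?F \<circ> ?F) x) y"
    using adj_inner[OF F _ y, of "?F x"] F x by (simp add: bop_ell2)
  finally show "cinner (kraus V (adj A \<circ> A) x) y = cinner ((adj ?F \<circ> ?F) x) y" .
qed

lemma comm_adj:
  assumes A: "bounded_op A"
    and C: "\<And>j k. A \<circ> (V j \<circ> adj (V k)) = (V j \<circ> adj (V k)) \<circ> A"
  shows "adj A \<circ> (V j \<circ> adj (V k)) = (V j \<circ> adj (V k)) \<circ> adj A"
proof -
  have VV: "bounded_op (V k \<circ> adj (V j))" by (rule bop_comp[OF V adj_bounded[OF V]])
  have e: "adj (A \<circ> (V k \<circ> adj (V j))) = adj ((V k \<circ> adj (V j)) \<circ> A)" by (simp only: C)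
  have l: "adj (A \<circ> (V k \<circ> adj (V j))) = (V j \<circ> adj (V k)) \<circ> adj A"
    by (simp add: adj_comp[OF A VV] adj_comp[OF V adj_bounded[OF V]] adj_adj[OF V])
  have r: "adj ((V k \<circ> adj (V j)) \<circ> A) = adj A \<circ> (V j \<circ> adj (V k))"
    by (simp add: adj_comp[OF VV A] adj_comp[OF V adj_bounded[OF V]] adj_adj[OF V])
  show ?thesis using e l r by simp
qed

lemma comm_md:
  assumes A: "bounded_op A"
    and C: "\<And>j k. A \<circ> (V j \<circ> adj (V k)) = (V j \<circ> adj (V k)) \<circ> A"
  shows "kraus V (A \<circ> adj A) = kraus V A \<circ> adj (kraus V A)"
proof -
  have A': "bounded_op (adj A)" by (rule adj_bounded[OF A])
  have F: "bounded_op (kraus V A)" by (rule kraus_bounded[OF A])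
  have "kraus V (adj (adj A) \<circ> adj A) = adj (kraus V (adj A)) \<circ> kraus V (adj A)"
    by (rule comm_P1[OF A' comm_adj[OF A C]])
  then show ?thesis
    by (simp add: adj_adj[OF A] kraus_adj[OF A] adj_adj[OF F])
qed

end

theorem mainTheorem2:
  fixes V :: "nat \<Rightarrow> ('i::countable) op"
  assumes bounded: "\<And>k. bounded_op (V k)"
    and trace_pres: "\<forall>x\<in>ell2. (\<lambda>n. l2norm ((\<Sum>k<n. adj (V k) (V k x)) - x)) \<longlonglongrightarrow> 0"
  shows "mult_domain (kraus V) = commutant {V j \<circ> adj (V k) | j k. True}"
proof (rule set_eqI)
  fix A
  have "A \<in> commutant {V j \<circ> adj (V k) | j k. True} \<longleftrightarrow>
      bounded_op A \<and> (\<forall>j k. A \<circ> (V j \<circ> adj (V k)) = (V j \<circ> adj (V k)) \<circ> A)"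
    unfolding commutant_def by blast
  moreover have "A \<in> mult_domain (kraus V) \<longleftrightarrow>
      bounded_op A \<and> kraus V (adj A \<circ> A) = adj (kraus V A) \<circ> kraus V A \<and>
      kraus V (A \<circ> adj A) = kraus V A \<circ> adj (kraus V A)"
    unfolding mult_domain_def by blast
  ultimately show "A \<in> mult_domain (kraus V) \<longleftrightarrow> A \<in> commutant {V j \<circ> adj (V k) | j k. True}"
    using md_comm[OF bounded trace_pres] comm_P1[OF bounded trace_pres] comm_md[OF bounded trace_pres]
    by blast
qed


end
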